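(* Let $\mathcal F$ be an upper Furstenberg family, written as in the definition of upper family, which satisfies the invariance property: if $F\in\mathcal F_{\delta,m}$ and $k\in\mathbb N$ then $F+k\in\mathcal F_{\delta,m}$. Then $A\in\mathcal F$ if and only if there are $\delta\in D$, numbers $k_m\in\mathbb N$ and finite sets $R_m\in\mathcal F_{\delta,m}$ ($m\in M$) such that $k_m+R_m\subseteq A$ for every $m\in M$.
   Context: $\mathbb N$ denotes the nonnegative integers. A Furstenberg family is hereditarily upward ($A\in\mathcal F$, $A\subseteq B$ imply $B\in\mathcal F$). A Furstenberg family $\mathcal F$ is upper if $\emptyset\notin\mathcal F$ and $\mathcal F=\bigcup_{\delta\in D}\mathcal F_\delta$ with $\mathcal F_\delta=\bigcap_{m\in M}\mathcal F_{\delta,m}$, where $D$ is an arbitrary index set, $M$ is countable, each $\mathcal F_{\delta,m}$ is finitely hereditarily upward (for each $A\in\mathcal F_{\delta,m}$ there is a finite set $F$ such that every $B$ with $F\cap A\subseteq B$ belongs to $\mathcal F_{\delta,m}$), and $\mathcal F$ is uniformly left invariant (for every $A\in\mathcal F$ there is $\delta\in D$ with $A-n:=\{k\in\mathbb N:k+n\in A\}\in\mathcal F_\delta$ for all $n\in\mathbb N$). *)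

theory Defs
  imports Main "HOL-Library.Countable_Set"
begin

definition hereditarily_upward :: "nat set set \<Rightarrow> bool" where
  "hereditarily_upward \<F> \<longleftrightarrow> (\<forall>A B. A \<in> \<F> \<longrightarrow> A \<subseteq> B \<longrightarrow> B \<in> \<F>)"

definition finitely_hereditarily_upward :: "nat set set \<Rightarrow> bool" where
  "finitely_hereditarily_upward \<F> \<longleftrightarrow>
     (\<forall>A \<in> \<F>. \<exists>G. finite G \<and> (\<forall>B. G \<inter> A \<subseteq> B \<longrightarrow> B \<in> \<F>))"

definition shift_left :: "nat set \<Rightarrow> nat \<Rightarrow> nat set" where
  "shift_left A n = {k. k + n \<in> A}"

definition fam_delta :: "'m set \<Rightarrow> ('d \<Rightarrow> 'm \<Rightarrow> nat set set) \<Rightarrow> 'd \<Rightarrow> nat set set" where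
  "fam_delta M Fam \<delta> = (\<Inter>m\<in>M. Fam \<delta> m)"

definition uniformly_left_invariant ::
  "nat set set \<Rightarrow> 'd set \<Rightarrow> 'm set \<Rightarrow> ('d \<Rightarrow> 'm \<Rightarrow> nat set set) \<Rightarrow> bool" where
  "uniformly_left_invariant \<F> D M Fam \<longleftrightarrow>
     (\<forall>A \<in> \<F>. \<exists>\<delta> \<in> D. \<forall>n. shift_left A n \<in> fam_delta M Fam \<delta>)"

definition upper_family_repr ::
  "nat set set \<Rightarrow> 'd set \<Rightarrow> 'm set \<Rightarrow> ('d \<Rightarrow> 'm \<Rightarrow> nat set set) \<Rightarrow> bool" where
  "upper_family_repr \<F> D M Fam \<longleftrightarrow>
     hereditarily_upward \<F> \<and>
     {} \<notin> \<F> \<and>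
     countable M \<and>
     (\<forall>\<delta> \<in> D. \<forall>m \<in> M. finitely_hereditarily_upward (Fam \<delta> m)) \<and>
     \<F> = (\<Union>\<delta> \<in> D. fam_delta M Fam \<delta>) \<and>
     uniformly_left_invariant \<F> D M Fam"

end

theory Submission
  imports Defs
begin

lemma fhu_up: "finitely_hereditarily_upward F \<Longrightarrow> X \<in> F \<Longrightarrow> X \<subseteq> B \<Longrightarrow> B \<in> F"
  unfolding finitely_hereditarily_upward_def by blast

theorem mainTheorem7:
  fixes \<F> :: "nat set set" and D :: "'d set" and M :: "'m set"
    and Fam :: "'d \<Rightarrow> 'm \<Rightarrow> nat set set" and A :: "nat set"
  assumes upper: "upper_family_repr \<F> D M Fam"
    and inv: "\<forall>\<delta> \<in> D. \<forall>m \<in> M. \<forall>G \<in> Fam \<delta> m. \<forall>k::nat. ((+) k) ` G \<in> Fam \<delta> m"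
  shows "A \<in> \<F> \<longleftrightarrow>
    (\<exists>\<delta> \<in> D. \<exists>k :: 'm \<Rightarrow> nat. \<exists>R :: 'm \<Rightarrow> nat set.
       \<forall>m \<in> M. finite (R m) \<and> R m \<in> Fam \<delta> m \<and> ((+) (k m)) ` (R m) \<subseteq> A)"
proof
  assume A: "A \<in> \<F>"
  have fhu: "\<forall>\<delta> \<in> D. \<forall>m \<in> M. finitely_hereditarily_upward (Fam \<delta> m)"
    and uli: "uniformly_left_invariant \<F> D M Fam"
    using upper unfolding upper_family_repr_def by auto
  obtain \<delta> where d: "\<delta> \<in> D" "\<forall>n. shift_left A n \<in> fam_delta M Fam \<delta>"
    using uli A unfolding uniformly_left_invariant_def by blast
  have "shift_left A 0 = A" unfolding shift_left_def by simp
  hence Am: "\<forall>m\<in>M. A \<in> Fam \<delta> m" using d(2)[rule_format, of 0]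
    unfolding fam_delta_def by auto
  have "\<forall>m\<in>M. \<exists>G. finite G \<and> (\<forall>B. G \<inter> A \<subseteq> B \<longrightarrow> B \<in> Fam \<delta> m)"
    using Am fhu d(1) unfolding finitely_hereditarily_upward_def by simp
  then obtain G where G: "\<forall>m\<in>M. finite (G m) \<and> (\<forall>B. G m \<inter> A \<subseteq> B \<longrightarrow> B \<in> Fam \<delta> m)"
    by metis
  show "\<exists>\<delta> \<in> D. \<exists>k :: 'm \<Rightarrow> nat. \<exists>R :: 'm \<Rightarrow> nat set.
       \<forall>m \<in> M. finite (R m) \<and> R m \<in> Fam \<delta> m \<and> ((+) (k m)) ` (R m) \<subseteq> A"
    apply (rule bexI[OF _ d(1)])
    apply (rule exI[of _ "\<lambda>_. 0"])
    apply (rule exI[of _ "\<lambda>m. G m \<inter> A"])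
    using G by auto
next
  assume "\<exists>\<delta> \<in> D. \<exists>k :: 'm \<Rightarrow> nat. \<exists>R :: 'm \<Rightarrow> nat set.
       \<forall>m \<in> M. finite (R m) \<and> R m \<in> Fam \<delta> m \<and> ((+) (k m)) ` (R m) \<subseteq> A"
  then obtain \<delta> k R where d: "\<delta> \<in> D"
    and R: "\<forall>m \<in> M. finite (R m) \<and> R m \<in> Fam \<delta> m \<and> ((+) (k m)) ` (R m) \<subseteq> A"
    by blast
  have fhu: "\<forall>\<delta> \<in> D. \<forall>m \<in> M. finitely_hereditarily_upward (Fam \<delta> m)"
    and F: "\<F> = (\<Union>\<delta> \<in> D. fam_delta M Fam \<delta>)"
    using upper unfolding upper_family_repr_def by auto
  have "\<forall>m\<in>M. A \<in> Fam \<delta> m"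
  proof
    fix m assume m: "m \<in> M"
    have Rm: "R m \<in> Fam \<delta> m" and sub: "((+) (k m)) ` (R m) \<subseteq> A" using m R by auto
    have "((+) (k m)) ` (R m) \<in> Fam \<delta> m" using inv d m Rm by simp
    moreover have "finitely_hereditarily_upward (Fam \<delta> m)" using fhu d m by simp
    ultimately show "A \<in> Fam \<delta> m" using fhu_up sub by metis
  qed
  hence "A \<in> fam_delta M Fam \<delta>" unfolding fam_delta_def by simp
  thus "A \<in> \<F>" using F d by auto
qed

end
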